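(* Let $R$ be a ring and let $A$ be an $(R,R)$-bimodule which is also a (not necessarily unital) associative ring such that $(aw)r=a(wr)$, $(ar)w=a(rw)$ and $(ra)w=r(aw)$ for all $a,w\in A$, $r\in R$. Suppose that for every $a\in A$ there exists $w\in A$ with $a+w+aw=0$. Let $S=I(R;A)$ be the Dorroh (ideal) extension, i.e. the additive group $R\oplus A$ with multiplication $(r,a)(s,w)=(rs,\,rw+as+aw)$. Then $R$ is NJ-symmetric if and only if $S$ is NJ-symmetric.
   Context: Rings are associative; $R$ has identity. $N(T)$ is the set of nilpotent elements, $J(T)$ the Jacobson radical of a ring $T$. $T$ is NJ-symmetric if for all $a,b,c\in T$, $abc\in N(T)$ implies $bac\in J(T)$. *)

theory Defs
  imports "HOL-Algebra.Ring"
begin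

definition class_ring :: "('r::ring_1) ring" where
  "class_ring = \<lparr>carrier = UNIV, mult = (*), one = 1, zero = 0, add = (+)\<rparr>"

text \<open>The Dorroh (ideal) extension I(R;A) = R \<oplus> A with
  (r,a)(s,w) = (rs, rw + as + aw); lm is the left and rm the right R-action on A.\<close>
definition dorroh :: "('r::ring_1 \<Rightarrow> 'a::ring \<Rightarrow> 'a) \<Rightarrow> ('a \<Rightarrow> 'r \<Rightarrow> 'a) \<Rightarrow> ('r \<times> 'a) ring" where
  "dorroh lm rm = \<lparr>carrier = UNIV,
     mult = (\<lambda>(r, a) (s, w). (r * s, lm r w + rm a s + a * w)),
     one = (1, 0), zero = (0, 0),
     add = (\<lambda>(r, a) (s, w). (r + s, a + w))\<rparr>"

definition nilpotents :: "('x, 'm) ring_scheme \<Rightarrow> 'x set" where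
  "nilpotents T = {x \<in> carrier T. \<exists>n::nat. x [^]\<^bsub>T\<^esub> n = \<zero>\<^bsub>T\<^esub>}"

definition left_ideal :: "('x, 'm) ring_scheme \<Rightarrow> 'x set \<Rightarrow> bool" where
  "left_ideal T I \<longleftrightarrow> I \<subseteq> carrier T \<and> \<zero>\<^bsub>T\<^esub> \<in> I
     \<and> (\<forall>x\<in>I. \<forall>y\<in>I. x \<oplus>\<^bsub>T\<^esub> y \<in> I)
     \<and> (\<forall>x\<in>I. \<ominus>\<^bsub>T\<^esub> x \<in> I)
     \<and> (\<forall>r\<in>carrier T. \<forall>x\<in>I. r \<otimes>\<^bsub>T\<^esub> x \<in> I)"

definition maximal_left_ideal :: "('x, 'm) ring_scheme \<Rightarrow> 'x set \<Rightarrow> bool" where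
  "maximal_left_ideal T I \<longleftrightarrow> left_ideal T I \<and> I \<noteq> carrier T
     \<and> (\<forall>J. left_ideal T J \<and> I \<subseteq> J \<longrightarrow> J = I \<or> J = carrier T)"

text \<open>Jacobson radical: intersection of all maximal left ideals (carrier if there are none).\<close>
definition jacobson :: "('x, 'm) ring_scheme \<Rightarrow> 'x set" where
  "jacobson T = carrier T \<inter> \<Inter>{I. maximal_left_ideal T I}"

definition NJ_symmetric :: "('x, 'm) ring_scheme \<Rightarrow> bool" where
  "NJ_symmetric T \<longleftrightarrow> (\<forall>a\<in>carrier T. \<forall>b\<in>carrier T. \<forall>c\<in>carrier T.
     a \<otimes>\<^bsub>T\<^esub> b \<otimes>\<^bsub>T\<^esub> c \<in> nilpotents T \<longrightarrow> b \<otimes>\<^bsub>T\<^esub> a \<otimes>\<^bsub>T\<^esub> c \<in> jacobson T)"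

end

theory Submission
  imports Defs
begin

lemma R_simps [simp]:
  "carrier (class_ring :: 'r::ring_1 ring) = UNIV"
  "(x::'r) \<otimes>\<^bsub>class_ring\<^esub> y = x * y"
  "(x::'r) \<oplus>\<^bsub>class_ring\<^esub> y = x + y"
  "\<one>\<^bsub>(class_ring :: 'r ring)\<^esub> = 1"
  "\<zero>\<^bsub>(class_ring :: 'r ring)\<^esub> = 0"
  by (simp_all add: class_ring_def)

lemma R_neg [simp]: "\<ominus>\<^bsub>class_ring\<^esub> (x::'r::ring_1) = - x"
  unfolding a_inv_def m_inv_def
  by (rule the_equality) (auto simp: class_ring_def eq_neg_iff_add_eq_0 add.commute)

lemma R_pow [simp]: "(x::'r::ring_1) [^]\<^bsub>class_ring\<^esub> (n::nat) = x ^ n"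
  by (induction n) (auto simp: power_commutes)

lemma S_simps [simp]:
  "carrier (dorroh lm rm) = UNIV"
  "(r, a) \<otimes>\<^bsub>dorroh lm rm\<^esub> (s, w) = (r * s, lm r w + rm a s + a * w)"
  "(r, a) \<oplus>\<^bsub>dorroh lm rm\<^esub> (s, w) = (r + s, a + w)"
  "\<one>\<^bsub>dorroh lm rm\<^esub> = (1, 0)"
  "\<zero>\<^bsub>dorroh lm rm\<^esub> = (0, 0)"
  by (simp_all add: dorroh_def)

lemma S_neg [simp]: "\<ominus>\<^bsub>dorroh lm rm\<^esub> (r, a) = (- r, - a)"
  unfolding a_inv_def m_inv_def
  by (rule the_equality) (auto simp: dorroh_def eq_neg_iff_add_eq_0 add.commute)

lemma S_pow_fst: "fst (x [^]\<^bsub>dorroh lm rm\<^esub> (n::nat)) = fst x ^ n"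
  by (induction n) (auto simp: power_commutes dorroh_def split: prod.splits)

locale dsetup =
  fixes lm :: "'r::ring_1 \<Rightarrow> 'a::ring \<Rightarrow> 'a" and rm :: "'a \<Rightarrow> 'r \<Rightarrow> 'a"
  assumes lm_add_right: "\<And>r a w. lm r (a + w) = lm r a + lm r w"
    and lm_one: "\<And>a. lm 1 a = a"
    and rm_add_left: "\<And>a w r. rm (a + w) r = rm a r + rm w r"
    and rm_one: "\<And>a. rm a 1 = a"
    and qreg: "\<And>a::'a. \<exists>w. a + w + a * w = 0"
begin

lemma lm0 [simp]: "lm r 0 = 0"
  using lm_add_right[of r 0 0] by simp

lemma rm0 [simp]: "rm 0 r = 0"
  using rm_add_left[of 0 0 r] by simp

abbreviation "S \<equiv> dorroh lm rm"

lemma S_pow0: "(r, 0) [^]\<^bsub>S\<^esub> (n::nat) = (r ^ n, 0)"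
  by (induction n) (auto simp: power_commutes)

lemma left_inv: "\<exists>u. u + b + u * (b::'a) = 0"
proof -
  obtain w where w: "b + w + b * w = 0" using qreg by blast
  obtain v where v: "w + v + w * v = 0" using qreg by blast
  have "(b + w + b * w) + v + (b + w + b * w) * v = b + (w + v + w * v) + b * (w + v + w * v)"
    by (simp add: algebra_simps)
  hence "v = b" using v w by simp
  with v show ?thesis by blast
qed

definition up :: "'r set \<Rightarrow> ('r \<times> 'a) set" where "up N = {(r, a). r \<in> N}"
definition down :: "('r \<times> 'a) set \<Rightarrow> 'r set" where "down M = {r. (r, 0) \<in> M}"

lemma down_up [simp]: "down (up N) = N" by (auto simp: up_def down_def)

lemma L1: "left_ideal class_ring N \<Longrightarrow> left_ideal S (up N)"
  unfolding left_ideal_def up_def by auto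

lemma L2: "left_ideal S M \<Longrightarrow> left_ideal class_ring (down M)"
  unfolding left_ideal_def down_def
proof (intro conjI ballI)
  assume h: "M \<subseteq> carrier S \<and> \<zero>\<^bsub>S\<^esub> \<in> M \<and> (\<forall>x\<in>M. \<forall>y\<in>M. x \<oplus>\<^bsub>S\<^esub> y \<in> M) \<and>
    (\<forall>x\<in>M. \<ominus>\<^bsub>S\<^esub> x \<in> M) \<and> (\<forall>r\<in>carrier S. \<forall>x\<in>M. r \<otimes>\<^bsub>S\<^esub> x \<in> M)"
  show "{r. (r, 0) \<in> M} \<subseteq> carrier class_ring" by simp
  show "\<zero>\<^bsub>class_ring\<^esub> \<in> {r. (r, 0) \<in> M}" using h by simp
  fix x y assume "x \<in> {r. (r, 0) \<in> M}" "y \<in> {r. (r, 0) \<in> M}"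
  thus "x \<oplus>\<^bsub>class_ring\<^esub> y \<in> {r. (r, 0) \<in> M}" using h by force
next
  fix x assume h: "M \<subseteq> carrier S \<and> \<zero>\<^bsub>S\<^esub> \<in> M \<and> (\<forall>x\<in>M. \<forall>y\<in>M. x \<oplus>\<^bsub>S\<^esub> y \<in> M) \<and>
    (\<forall>x\<in>M. \<ominus>\<^bsub>S\<^esub> x \<in> M) \<and> (\<forall>r\<in>carrier S. \<forall>x\<in>M. r \<otimes>\<^bsub>S\<^esub> x \<in> M)"
    and "x \<in> {r. (r, 0) \<in> M}"
  thus "\<ominus>\<^bsub>class_ring\<^esub> x \<in> {r. (r, 0) \<in> M}" by force
next
  fix r x assume h: "M \<subseteq> carrier S \<and> \<zero>\<^bsub>S\<^esub> \<in> M \<and> (\<forall>x\<in>M. \<forall>y\<in>M. x \<oplus>\<^bsub>S\<^esub> y \<in> M) \<and>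
    (\<forall>x\<in>M. \<ominus>\<^bsub>S\<^esub> x \<in> M) \<and> (\<forall>r\<in>carrier S. \<forall>x\<in>M. r \<otimes>\<^bsub>S\<^esub> x \<in> M)"
    and "x \<in> {r. (r, 0) \<in> M}"
  thus "r \<otimes>\<^bsub>class_ring\<^esub> x \<in> {r. (r, 0) \<in> M}" 
    using h[THEN conjunct2, THEN conjunct2, THEN conjunct2, THEN conjunct2, rule_format, of "(r,0)" "(x,0)"]
    by simp
qed

lemma L3': assumes "left_ideal S K" "\<And>a. (0, a) \<in> K" shows "K = up (down K)"
proof -
  have add: "\<And>x y. x \<in> K \<Longrightarrow> y \<in> K \<Longrightarrow> x \<oplus>\<^bsub>S\<^esub> y \<in> K" using assms(1) unfolding left_ideal_def by blast
  show ?thesis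
  proof (auto simp: up_def down_def)
    fix r a assume "(r, a) \<in> K"
    from add[OF this assms(2)[of "-a"]] show "(r, 0) \<in> K" by simp
  next
    fix r a assume "(r, 0) \<in> K"
    from add[OF this assms(2)[of "a"]] show "(r, a) \<in> K" by simp
  qed
qed

lemma L3: assumes M: "maximal_left_ideal S M" shows "(0, a) \<in> M"
proof -
  have li: "left_ideal S M" and ne: "M \<noteq> UNIV"
    and mx: "\<And>J. left_ideal S J \<Longrightarrow> M \<subseteq> J \<Longrightarrow> J = M \<or> J = UNIV"
    using M unfolding maximal_left_ideal_def by auto
  have z: "(0,0) \<in> M" and add: "\<And>x y. x \<in> M \<Longrightarrow> y \<in> M \<Longrightarrow> x \<oplus>\<^bsub>S\<^esub> y \<in> M"
    and neg: "\<And>x. x \<in> M \<Longrightarrow> \<ominus>\<^bsub>S\<^esub> x \<in> M"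
    and mul: "\<And>r x. x \<in> M \<Longrightarrow> r \<otimes>\<^bsub>S\<^esub> x \<in> M"
    using li unfolding left_ideal_def S_simps(1,5) by blast+
  define J :: "('r \<times> 'a) set" where "J = {(r, y). \<exists>x. (r, x) \<in> M}"
  have "left_ideal S J"
    unfolding left_ideal_def
  proof (intro conjI ballI)
    show "J \<subseteq> carrier S" by simp
    show "\<zero>\<^bsub>S\<^esub> \<in> J" using z by (auto simp: J_def)
  next
    fix p q assume "p \<in> J" "q \<in> J"
    then obtain r y s t x x' where p: "p = (r,y)" "(r,x) \<in> M" and q: "q = (s,t)" "(s,x') \<in> M"
      by (auto simp: J_def)
    show "p \<oplus>\<^bsub>S\<^esub> q \<in> J" using add[OF p(2) q(2)] p q by (auto simp: J_def)
  next
    fix p assume "p \<in> J"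
    then obtain r y x where p: "p = (r,y)" "(r,x) \<in> M" by (auto simp: J_def)
    show "\<ominus>\<^bsub>S\<^esub> p \<in> J" using neg[OF p(2)] p by (auto simp: J_def)
  next
    fix p q :: "'r \<times> 'a" assume "q \<in> J"
    then obtain r y x where q: "q = (r,y)" "(r,x) \<in> M" by (auto simp: J_def)
    obtain s w where p: "p = (s, w)" by fastforce
    show "p \<otimes>\<^bsub>S\<^esub> q \<in> J" using mul[OF q(2), of p] p q by (auto simp: J_def)
  qed
  moreover have "M \<subseteq> J" by (auto simp: J_def)
  ultimately have "J = M \<or> J = UNIV" using mx by blast
  moreover have "J \<noteq> UNIV"
  proof
    assume "J = UNIV"
    hence "(1, 0) \<in> J" by simp
    then obtain x where x: "(1, x) \<in> M" by (auto simp: J_def)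
    obtain u where u: "u + x + u * x = 0" using left_inv by blast
    have "(1, u) \<otimes>\<^bsub>S\<^esub> (1, x) \<in> M" by (rule mul[OF x])
    hence one: "(1, 0) \<in> M" using u by (simp add: lm_one rm_one add.commute)
    have "M = UNIV"
    proof safe
      fix r a
      have "(r, a) \<otimes>\<^bsub>S\<^esub> (1, 0) \<in> M" by (rule mul[OF one])
      thus "(r, a) \<in> M" by (simp add: rm_one)
    qed simp
    with ne show False by simp
  qed
  ultimately have "J = M" by blast
  moreover have "(0, a) \<in> J" using z by (auto simp: J_def)
  ultimately show ?thesis by simp
qed

lemma L4: assumes "maximal_left_ideal S M" shows "maximal_left_ideal class_ring (down M)"
proof -
  have li: "left_ideal S M" and ne: "M \<noteq> UNIV"
    and mx: "\<And>J. left_ideal S J \<Longrightarrow> M \<subseteq> J \<Longrightarrow> J = M \<or> J = UNIV"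
    using assms unfolding maximal_left_ideal_def by auto
  have eq: "M = up (down M)" using L3'[OF li L3[OF assms]] .
  show ?thesis unfolding maximal_left_ideal_def
  proof (intro conjI allI impI)
    show "left_ideal class_ring (down M)" using L2[OF li] .
    show "down M \<noteq> carrier class_ring"
    proof
      assume "down M = carrier class_ring"
      hence "M = UNIV" using eq by (auto simp: up_def)
      with ne show False by simp
    qed
  next
    fix J assume h: "left_ideal class_ring J \<and> down M \<subseteq> J"
    have "M \<subseteq> up J" using h eq by (auto simp: up_def down_def)
    hence "up J = M \<or> up J = UNIV" using mx L1 h by blast
    thus "J = down M \<or> J = carrier class_ring"
    proof
      assume "up J = M" thus ?thesis using down_up by metis
    next
      assume "up J = UNIV" hence "J = UNIV" by (auto simp: up_def)
      thus ?thesis by simp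
    qed
  qed
qed

lemma L5: assumes "maximal_left_ideal class_ring N" shows "maximal_left_ideal S (up N)"
proof -
  have li: "left_ideal class_ring N" and ne: "N \<noteq> UNIV"
    and mx: "\<And>J. left_ideal class_ring J \<Longrightarrow> N \<subseteq> J \<Longrightarrow> J = N \<or> J = UNIV"
    using assms unfolding maximal_left_ideal_def by auto
  have z: "0 \<in> N" using li unfolding left_ideal_def by simp
  show ?thesis unfolding maximal_left_ideal_def
  proof (intro conjI allI impI)
    show "left_ideal S (up N)" using L1[OF li] .
    show "up N \<noteq> carrier S"
    proof
      assume "up N = carrier S"
      hence "N = UNIV" by (auto simp: up_def)
      with ne show False by simp
    qed
  next
    fix K assume h: "left_ideal S K \<and> up N \<subseteq> K"
    have "\<And>a. (0, a) \<in> K" using h z by (auto simp: up_def)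
    hence eq: "K = up (down K)" using L3' h by blast
    have "N \<subseteq> down K" using h by (auto simp: up_def down_def)
    hence "down K = N \<or> down K = UNIV" using mx L2 h by blast
    thus "K = up N \<or> K = carrier S"
    proof
      assume "down K = N" thus ?thesis using eq by simp
    next
      assume "down K = UNIV" thus ?thesis using eq by (auto simp: up_def)
    qed
  qed
qed

lemma jac: "((r, a) \<in> jacobson S) = (r \<in> jacobson class_ring)"
proof
  assume h: "(r, a) \<in> jacobson S"
  show "r \<in> jacobson class_ring" unfolding jacobson_def
  proof (simp, intro allI impI)
    fix N :: "'r set" assume "maximal_left_ideal class_ring N"
    hence "(r, a) \<in> up N" using L5 h unfolding jacobson_def by blast
    thus "r \<in> N" by (simp add: up_def)
  qed
next
  assume h: "r \<in> jacobson class_ring"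
  show "(r, a) \<in> jacobson S" unfolding jacobson_def
  proof (simp, intro allI impI)
    fix M assume M: "maximal_left_ideal S M"
    hence "r \<in> down M" using L4 h unfolding jacobson_def by blast
    hence "(r, a) \<in> up (down M)" by (simp add: up_def)
    thus "(r, a) \<in> M" using L3'[OF _ L3[OF M]] M unfolding maximal_left_ideal_def by blast
  qed
qed

lemma nilS: "x \<in> nilpotents S \<Longrightarrow> fst x \<in> nilpotents class_ring"
  unfolding nilpotents_def using S_pow_fst[of lm rm x] by (auto, metis fst_conv)

lemma nilR: "r \<in> nilpotents class_ring \<Longrightarrow> (r, 0) \<in> nilpotents S"
  unfolding nilpotents_def by (auto simp: S_pow0)

theorem main: "NJ_symmetric (class_ring :: 'r ring) \<longleftrightarrow> NJ_symmetric S"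
proof
  assume R: "NJ_symmetric (class_ring :: 'r ring)"
  show "NJ_symmetric S" unfolding NJ_symmetric_def
  proof (intro ballI impI)
    fix x y z :: "'r \<times> 'a"
    assume h: "x \<otimes>\<^bsub>S\<^esub> y \<otimes>\<^bsub>S\<^esub> z \<in> nilpotents S"
    obtain r1 a1 r2 a2 r3 a3 where xyz: "x = (r1,a1)" "y = (r2,a2)" "z = (r3,a3)"
      by (metis prod.exhaust)
    have "r1 * r2 * r3 \<in> nilpotents class_ring" using nilS[OF h] xyz by simp
    hence "r2 * r1 * r3 \<in> jacobson class_ring" using R unfolding NJ_symmetric_def by simp
    thus "y \<otimes>\<^bsub>S\<^esub> x \<otimes>\<^bsub>S\<^esub> z \<in> jacobson S" using xyz jac by simp
  qed
next
  assume Sh: "NJ_symmetric S"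
  show "NJ_symmetric (class_ring :: 'r ring)" unfolding NJ_symmetric_def
  proof (intro ballI impI)
    fix a b c :: 'r
    assume "a \<otimes>\<^bsub>class_ring\<^esub> b \<otimes>\<^bsub>class_ring\<^esub> c \<in> nilpotents class_ring"
    hence "(a * b * c, 0) \<in> nilpotents S" using nilR by simp
    hence "(a, 0) \<otimes>\<^bsub>S\<^esub> (b, 0) \<otimes>\<^bsub>S\<^esub> (c, 0) \<in> nilpotents S" by simp
    hence "(b, 0) \<otimes>\<^bsub>S\<^esub> (a, 0) \<otimes>\<^bsub>S\<^esub> (c, 0) \<in> jacobson S"
      using Sh[unfolded NJ_symmetric_def, rule_format, of "(a,0)" "(b,0)" "(c,0)"] by simp
    hence "(b * a * c, 0) \<in> jacobson S" by simp
    thus "b \<otimes>\<^bsub>class_ring\<^esub> a \<otimes>\<^bsub>class_ring\<^esub> c \<in> jacobson class_ring" using jac by simp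
  qed
qed

end

theorem proposition2p26:
  fixes lm :: "'r::ring_1 \<Rightarrow> 'a::ring \<Rightarrow> 'a" and rm :: "'a \<Rightarrow> 'r \<Rightarrow> 'a"
  assumes lm_add_right: "\<And>r a w. lm r (a + w) = lm r a + lm r w"
    and lm_add_left: "\<And>r s a. lm (r + s) a = lm r a + lm s a"
    and lm_mult: "\<And>r s a. lm (r * s) a = lm r (lm s a)"
    and lm_one: "\<And>a. lm 1 a = a"
    and rm_add_left: "\<And>a w r. rm (a + w) r = rm a r + rm w r"
    and rm_add_right: "\<And>a r s. rm a (r + s) = rm a r + rm a s"
    and rm_mult: "\<And>a r s. rm a (r * s) = rm (rm a r) s"
    and rm_one: "\<And>a. rm a 1 = a"
    and bimod: "\<And>r a s. rm (lm r a) s = lm r (rm a s)"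
    and comp1: "\<And>a w r. rm (a * w) r = a * rm w r"
    and comp2: "\<And>a r w. rm a r * w = a * lm r w"
    and comp3: "\<And>r a w. lm r a * w = lm r (a * w)"
    and qreg: "\<And>a::'a. \<exists>w. a + w + a * w = 0"
  shows "NJ_symmetric (class_ring :: 'r ring) \<longleftrightarrow> NJ_symmetric (dorroh lm rm)"
proof -
  interpret dsetup lm rm
    by unfold_locales (fact lm_add_right lm_one rm_add_left rm_one qreg)+
  show ?thesis by (rule main)
qed

end
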